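(* Let $X$, $Y$, $\mathcal{E}$ be Euclidean-space-valued random variables on a probability space. Suppose $\Phi\in\mathcal{I}$ and that $\epsilon\in\mathrm{supp}(\mathcal{E})$ is such that $X$ and $Y$ are conditionally independent given $(\Phi,\mathcal{E}=\epsilon)$. Then for this $\epsilon$, $$\Phi\in\arg\max_{Z\in\sigma(X)} I(Y;Z\mid\epsilon),$$ where $I(\cdot;\cdot\mid\epsilon)$ denotes mutual information under the conditional law given $\mathcal{E}=\epsilon$.
   Context: The set of invariant features is $\mathcal{I}=\{\Phi\in\sigma(X): p(Y\mid\Phi,\epsilon)=p(Y\mid\Phi)\ \text{for all }\epsilon\in\mathrm{supp}(\mathcal{E})\}$. Writing $Z\in\sigma(X)$ means $Z$ is a random variable measurable with respect to $\sigma(X)$. *)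

theory Defs
  imports "HOL-Probability.Probability"
begin

definition msupp :: "'e::topological_space measure \<Rightarrow> 'e set" where
  "msupp \<mu> = {x. \<forall>U. open U \<and> x \<in> U \<longrightarrow> emeasure \<mu> U > 0}"

definition gen_sigma :: "'a measure \<Rightarrow> ('a \<Rightarrow> 'b::topological_space) \<Rightarrow> 'a measure" where
  "gen_sigma P V = vimage_algebra (space P) V borel"

text \<open>Kullback-Leibler divergence KL(Q || P) with values in [0, infinity] (natural log):
  infinite unless Q is absolutely continuous w.r.t. P; otherwise the integral of
  f ln f - f + 1 (a nonnegative integrand, equal to the usual integral of f ln f
  for probability measures) with f = dQ/dP.\<close>
definition KL_ext :: "'a measure \<Rightarrow> 'a measure \<Rightarrow> ennreal" where
  "KL_ext P Q =
     (if absolutely_continuous P Q then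
        (\<integral>\<^sup>+ x. ennreal (enn2real (RN_deriv P Q x) * ln (enn2real (RN_deriv P Q x))
                         - enn2real (RN_deriv P Q x) + 1) \<partial>P)
      else \<infinity>)"

definition mutual_info ::
  "'a measure \<Rightarrow> ('a \<Rightarrow> 'b::topological_space) \<Rightarrow> ('a \<Rightarrow> 'c::topological_space) \<Rightarrow> ennreal" where
  "mutual_info P A B =
     KL_ext (distr P borel A \<Otimes>\<^sub>M distr P borel B)
            (distr P (borel \<Otimes>\<^sub>M borel) (\<lambda>\<omega>. (A \<omega>, B \<omega>)))"

definition cond_indep ::
  "'a measure \<Rightarrow> ('a \<Rightarrow> 'u::topological_space) \<Rightarrow> ('a \<Rightarrow> 'v::topological_space)
     \<Rightarrow> ('a \<Rightarrow> 'w::topological_space) \<Rightarrow> bool" where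
  "cond_indep P U V W \<longleftrightarrow>
     (\<forall>A \<in> sets borel. \<forall>B \<in> sets borel.
        AE \<omega> in P.
          real_cond_exp P (gen_sigma P W) (indicator (U -` A \<inter> V -` B \<inter> space P)) \<omega>
          = real_cond_exp P (gen_sigma P W) (indicator (U -` A \<inter> space P)) \<omega>
            * real_cond_exp P (gen_sigma P W) (indicator (V -` B \<inter> space P)) \<omega>)"

definition cond_law_kernel ::
  "'a measure \<Rightarrow> ('a \<Rightarrow> 'e::topological_space) \<Rightarrow> ('e \<Rightarrow> 'a measure) \<Rightarrow> bool" where
  "cond_law_kernel M E Pe \<longleftrightarrow>
     (\<forall>e. prob_space (Pe e) \<and> sets (Pe e) = sets M) \<and>
     (\<forall>A \<in> sets M. (\<lambda>e. measure (Pe e) A) \<in> borel_measurable borel) \<and>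
     (\<forall>A \<in> sets M. \<forall>C \<in> sets borel.
        measure M (A \<inter> E -` C \<inter> space M)
          = (\<integral>e. indicator C e * measure (Pe e) A \<partial>(distr M borel E)))"

text \<open>p(Y | Phi, E = e) = p(Y | Phi): the conditional law of Y given Phi under
  the conditional measure Pe e is given by the same function of Phi as under M.\<close>
definition same_cond_law ::
  "'a measure \<Rightarrow> 'a measure \<Rightarrow> ('a \<Rightarrow> 'y::topological_space) \<Rightarrow> ('a \<Rightarrow> 'p::topological_space) \<Rightarrow> bool" where
  "same_cond_law M Q Y Phi \<longleftrightarrow>
     (\<forall>B \<in> sets borel. \<exists>g \<in> borel_measurable (borel :: 'p measure).
        (AE \<omega> in M. real_cond_exp M (gen_sigma M Phi) (indicator (Y -` B \<inter> space M)) \<omega> = g (Phi \<omega>)) \<and>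
        (AE \<omega> in Q. real_cond_exp Q (gen_sigma Q Phi) (indicator (Y -` B \<inter> space Q)) \<omega> = g (Phi \<omega>)))"

definition invariant_feature ::
  "'a measure \<Rightarrow> ('a \<Rightarrow> 'x::topological_space) \<Rightarrow> ('a \<Rightarrow> 'y::topological_space)
     \<Rightarrow> ('a \<Rightarrow> 'e::topological_space) \<Rightarrow> ('e \<Rightarrow> 'a measure) \<Rightarrow> ('a \<Rightarrow> 'p::topological_space) \<Rightarrow> bool" where
  "invariant_feature M X Y E Pe Phi \<longleftrightarrow>
     Phi \<in> gen_sigma M X \<rightarrow>\<^sub>M borel \<and>
     (\<forall>e \<in> msupp (distr M borel E). same_cond_law M (Pe e) Y Phi)"

end

theory Submission
  imports Defs
begin

definition Fk :: "real \<Rightarrow> real" where "Fk t = t * ln t - t + 1"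

lemma Fk_tangent:
  assumes "s \<ge> 0" "c > 0"
  shows "s * ln c - c + 1 \<le> Fk s"
proof (cases "s = 0")
  case True then show ?thesis using assms by (simp add: Fk_def)
next
  case False
  then have s: "s > 0" using assms by auto
  have "ln (c / s) \<le> c / s - 1" using s assms by (intro ln_le_minus_one) auto
  then have "ln c - ln s \<le> c / s - 1" using s assms by (simp add: ln_div)
  then have "s * (ln c - ln s) \<le> s * (c / s - 1)" using s by (intro mult_left_mono) auto
  then show ?thesis using s by (simp add: Fk_def algebra_simps)
qed

lemma Fk_sup:
  assumes "s \<ge> 0" "\<And>c. c \<in> \<rat> \<Longrightarrow> c > 0 \<Longrightarrow> s * ln c - c + 1 \<le> y"
  shows "Fk s \<le> y"
proof (rule field_le_epsilon)
  fix e :: real assume e: "0 < e"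
  obtain c where c: "c \<in> \<rat>" "s < c" "c < s + e" using Rats_dense_in_real[of s "s+e"] e by auto
  have cpos: "c > 0" using c assms by auto
  have "ln s \<le> ln c" if "s > 0" using that c by simp
  then have "s * ln s \<le> s * ln c" using assms(1) by (cases "s = 0") (auto intro: mult_left_mono)
  then have "Fk s \<le> s * ln c - c + 1 + e" using c by (simp add: Fk_def)
  also have "\<dots> \<le> y + e" using assms(2)[OF c(1) cpos] by simp
  finally show "Fk s \<le> y + e" .
qed

lemma Fk_nonneg: "s \<ge> 0 \<Longrightarrow> Fk s \<ge> 0"
  using Fk_tangent[of s 1] by simp

lemma Fk_measurable[measurable]: "Fk \<in> borel_measurable borel"
  unfolding Fk_def by measurable

lemma cond_jensen_Fk:
  assumes P: "prob_space M" and sub: "subalgebra M F"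
    and f: "integrable M f" "AE x in M. f x \<ge> 0" "integrable M (\<lambda>x. Fk (f x))"
  shows "AE x in M. Fk (real_cond_exp M F f x) \<le> real_cond_exp M F (\<lambda>x. Fk (f x)) x"
proof -
  interpret prob_space M by fact
  interpret finite_measure_subalgebra M F
    by unfold_locales (use sub in auto)
  have [measurable]: "f \<in> borel_measurable M" using f by auto
  have one: "\<And>c. c \<in> \<rat> \<Longrightarrow> c > 0 \<Longrightarrow> AE x in M. real_cond_exp M F f x * ln c - c + 1 \<le> real_cond_exp M F (\<lambda>x. Fk (f x)) x"
  proof -
    fix c :: real assume c: "c \<in> \<rat>" "c > 0"
    have i1: "integrable M (\<lambda>x. f x * ln c)" using f by auto
    have i2: "integrable M (\<lambda>x. 1 - c :: real)" by auto
    have "AE x in M. real_cond_exp M F (\<lambda>x. f x * ln c + (1 - c)) x \<le> real_cond_exp M F (\<lambda>x. Fk (f x)) x"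
      apply (rule real_cond_exp_mono)
      using f(2) apply eventually_elim using Fk_tangent c apply (metis add.commute add_diff_eq mult.commute)
      using i1 i2 f by auto
    moreover have "AE x in M. real_cond_exp M F (\<lambda>x. f x * ln c + (1 - c)) x
        = real_cond_exp M F (\<lambda>x. f x * ln c) x + real_cond_exp M F (\<lambda>x. 1 - c) x"
      by (rule real_cond_exp_add[OF i1 i2])
    moreover have "AE x in M. real_cond_exp M F (\<lambda>x. 1 - c) x = 1 - c"
      by (rule real_cond_exp_F_meas) auto
    moreover have "AE x in M. real_cond_exp M F (\<lambda>x. ln c * f x) x = ln c * real_cond_exp M F f x"
      by (rule real_cond_exp_cmult[OF f(1)])
    ultimately show "AE x in M. real_cond_exp M F f x * ln c - c + 1 \<le> real_cond_exp M F (\<lambda>x. Fk (f x)) x"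
      by eventually_elim (simp add: mult.commute)
  qed
  have "AE x in M. \<forall>c\<in>{c\<in>\<rat>. c > 0}. real_cond_exp M F f x * ln c - c + 1 \<le> real_cond_exp M F (\<lambda>x. Fk (f x)) x"
    by (rule AE_ball_countable') (use one countable_rat in \<open>auto intro: countable_subset[of _ \<rat>]\<close>)
  moreover have "AE x in M. real_cond_exp M F f x \<ge> 0"
    using f by (intro real_cond_exp_pos) auto
  ultimately show ?thesis
    by eventually_elim (rule Fk_sup, auto)
qed

lemma KL_ext_Fk: "KL_ext P Q = (if absolutely_continuous P Q then
   (\<integral>\<^sup>+ x. ennreal (Fk (enn2real (RN_deriv P Q x))) \<partial>P) else \<infinity>)"
  unfolding KL_ext_def Fk_def by simp

lemma dens_real:
  assumes dens: "density M h = N" and hm[measurable]: "h \<in> borel_measurable M"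
    and fin: "AE x in M. h x \<noteq> \<infinity>" and fN: "finite_measure N" and A[measurable]: "A \<in> sets M"
  shows "integrable M (\<lambda>x. indicator A x * enn2real (h x))"
    "ennreal (\<integral> x. indicator A x * enn2real (h x) \<partial>M) = emeasure N A"
proof -
  have eq: "(\<integral>\<^sup>+ x. ennreal (indicator A x * enn2real (h x)) \<partial>M) = emeasure N A"
  proof -
    have "(\<integral>\<^sup>+ x. ennreal (indicator A x * enn2real (h x)) \<partial>M) = (\<integral>\<^sup>+ x. h x * indicator A x \<partial>M)"
      using fin by (intro nn_integral_cong_AE) (auto simp: indicator_def less_top)
    also have "\<dots> = emeasure (density M h) A" by (simp add: emeasure_density)
    finally show ?thesis using dens by simp
  qed
  have "emeasure N A < \<infinity>" using finite_measure.emeasure_finite[OF fN, of A] by (simp add: less_top[symmetric])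
  then show int: "integrable M (\<lambda>x. indicator A x * enn2real (h x))"
    using eq by (intro integrableI_nonneg) auto
  show "ennreal (\<integral> x. indicator A x * enn2real (h x) \<partial>M) = emeasure N A"
    using nn_integral_eq_integral[OF int] eq by auto
qed

lemma KL_dpi:
  assumes Pm: "prob_space \<mu>" and Pn: "prob_space \<nu>" and sets_eq: "sets \<nu> = sets \<mu>"
    and T[measurable]: "T \<in> \<mu> \<rightarrow>\<^sub>M N"
  shows "KL_ext (distr \<mu> N T) (distr \<nu> N T) \<le> KL_ext \<mu> \<nu>"
proof (cases "absolutely_continuous \<mu> \<nu>")
  case False then show ?thesis by (simp add: KL_ext_def)
next
  case ac: True
  interpret m: prob_space \<mu> by fact
  interpret n: prob_space \<nu> by fact
  have Tn[measurable]: "T \<in> \<nu> \<rightarrow>\<^sub>M N" using T measurable_cong_sets[OF sets_eq refl] by blast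
  have sp: "space \<nu> = space \<mu>" using sets_eq by (rule sets_eq_imp_space_eq)
  define \<mu>T where "\<mu>T = distr \<mu> N T"
  define \<nu>T where "\<nu>T = distr \<nu> N T"
  have PmT: "prob_space \<mu>T" unfolding \<mu>T_def by (rule m.prob_space_distr) simp
  have PnT: "prob_space \<nu>T" unfolding \<nu>T_def by (rule n.prob_space_distr) simp
  interpret mT: prob_space \<mu>T by fact
  interpret nT: prob_space \<nu>T by fact
  have setsT: "sets \<nu>T = sets \<mu>T" by (simp add: \<mu>T_def \<nu>T_def)
  have acT: "absolutely_continuous \<mu>T \<nu>T"
    unfolding absolutely_continuous_def
  proof
    fix A assume "A \<in> null_sets \<mu>T"
    then have A1: "A \<in> sets N" "emeasure \<mu>T A = 0" by (auto simp: \<mu>T_def)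
    then have A: "A \<in> sets N" "emeasure \<mu> (T -` A \<inter> space \<mu>) = 0"
      by (auto simp: \<mu>T_def emeasure_distr)
    then have "T -` A \<inter> space \<mu> \<in> null_sets \<mu>" by auto
    then have "T -` A \<inter> space \<mu> \<in> null_sets \<nu>" using ac unfolding absolutely_continuous_def by auto
    then show "A \<in> null_sets \<nu>T" using A unfolding \<nu>T_def
      by (intro null_setsI) (auto simp: emeasure_distr sp)
  qed
  define q where "q = RN_deriv \<mu> \<nu>"
  define qT where "qT = RN_deriv \<mu>T \<nu>T"
  have [measurable]: "q \<in> borel_measurable \<mu>" unfolding q_def by simp
  have "qT \<in> borel_measurable \<mu>T" unfolding qT_def by (rule borel_measurable_RN_deriv)
  then have [measurable]: "qT \<in> borel_measurable N"
    using measurable_cong_sets[of \<mu>T N borel borel] by (simp add: \<mu>T_def)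
  have dq: "density \<mu> q = \<nu>" unfolding q_def by (rule m.density_RN_deriv[OF ac sets_eq])
  have dqT: "density \<mu>T qT = \<nu>T" unfolding qT_def by (rule mT.density_RN_deriv[OF acT setsT])
  have finq: "AE x in \<mu>. q x \<noteq> \<infinity>" unfolding q_def
    by (rule m.RN_deriv_finite[OF n.sigma_finite_measure_axioms ac sets_eq])
  have finqT': "AE y in \<mu>T. qT y \<noteq> \<infinity>" unfolding qT_def
    by (rule mT.RN_deriv_finite[OF nT.sigma_finite_measure_axioms acT setsT])
  have finqT: "AE x in \<mu>. qT (T x) \<noteq> \<infinity>"
  proof -
    have "{y \<in> space N. qT y \<noteq> \<infinity>} \<in> sets N" by measurable
    then show ?thesis using finqT' AE_distr_iff[OF T, of "\<lambda>y. qT y \<noteq> \<infinity>"] unfolding \<mu>T_def by blast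
  qed
  define qr where "qr x = enn2real (q x)" for x
  define qTr where "qTr y = enn2real (qT y)" for y
  have [measurable]: "qr \<in> borel_measurable \<mu>" "qTr \<in> borel_measurable N"
    unfolding qr_def qTr_def by auto
  have int_q: "integrable \<mu> qr"
  proof -
    have i: "integrable \<mu> (\<lambda>x. indicator (space \<mu>) x * enn2real (q x))"
      by (rule dens_real(1)[OF dq _ finq n.finite_measure_axioms sets.top]) measurable
    have "integrable \<mu> qr = integrable \<mu> (\<lambda>x. indicator (space \<mu>) x * enn2real (q x))"
      by (rule Bochner_Integration.integrable_cong) (auto simp: qr_def)
    then show ?thesis using i by simp
  qed
  have int_qT': "integrable \<mu>T qTr"
  proof -
    have i: "integrable \<mu>T (\<lambda>x. indicator (space \<mu>T) x * enn2real (qT x))"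
      by (rule dens_real(1)[OF dqT _ finqT' nT.finite_measure_axioms sets.top]) (simp add: qT_def)
    have "integrable \<mu>T qTr = integrable \<mu>T (\<lambda>x. indicator (space \<mu>T) x * enn2real (qT x))"
      by (rule Bochner_Integration.integrable_cong) (auto simp: qTr_def)
    then show ?thesis using i by simp
  qed
  have int_qT: "integrable \<mu> (\<lambda>x. qTr (T x))"
    using int_qT' unfolding \<mu>T_def by (subst (asm) integrable_distr_eq) auto
  define G where "G = vimage_algebra (space \<mu>) T N"
  have subG: "subalgebra \<mu> G"
    unfolding subalgebra_def G_def using sets_image_in_sets[OF refl T] by auto
  interpret G: finite_measure_subalgebra \<mu> G by unfold_locales (use subG in auto)
  have ce: "AE x in \<mu>. real_cond_exp \<mu> G qr x = qTr (T x)"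
  proof (rule G.real_cond_exp_charact)
    show "integrable \<mu> qr" "integrable \<mu> (\<lambda>x. qTr (T x))" by fact+
    have "T \<in> G \<rightarrow>\<^sub>M N" unfolding G_def
      by (rule measurable_vimage_algebra1) (use measurable_space[OF T] in auto)
    then show "(\<lambda>x. qTr (T x)) \<in> borel_measurable G" by measurable
    fix A assume "A \<in> sets G"
    then obtain B where B[measurable]: "B \<in> sets N" and A: "A = T -` B \<inter> space \<mu>"
      unfolding G_def using sets_vimage_algebra2[of T "space \<mu>" N] measurable_space[OF T] by auto
    have Am[measurable]: "A \<in> sets \<mu>" using A by simp
    have "ennreal (\<integral> x \<in> A. qr x \<partial>\<mu>) = emeasure \<nu> A"
      using dens_real(2)[OF dq _ finq n.finite_measure_axioms Am] by (simp add: qr_def set_lebesgue_integral_def)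
    moreover have "ennreal (\<integral> x \<in> A. qTr (T x) \<partial>\<mu>) = emeasure \<nu> A"
    proof -
      have "(\<integral> x \<in> A. qTr (T x) \<partial>\<mu>) = (\<integral> x. indicator B (T x) * qTr (T x) \<partial>\<mu>)"
        unfolding A set_lebesgue_integral_def by (intro Bochner_Integration.integral_cong) (auto simp: indicator_def)
      also have "\<dots> = (\<integral> y. indicator B y * qTr y \<partial>\<mu>T)"
        unfolding \<mu>T_def by (subst integral_distr) auto
      finally have "ennreal (\<integral> x \<in> A. qTr (T x) \<partial>\<mu>) = emeasure \<nu>T B"
        using dens_real(2)[OF dqT _ finqT' nT.finite_measure_axioms] B by (simp add: qTr_def \<mu>T_def)
      then show ?thesis by (simp add: \<nu>T_def emeasure_distr A sp)
    qed
    moreover have "0 \<le> (\<integral> x \<in> A. qr x \<partial>\<mu>)" "0 \<le> (\<integral> x \<in> A. qTr (T x) \<partial>\<mu>)"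
      unfolding set_lebesgue_integral_def qr_def qTr_def
      by (auto intro!: Bochner_Integration.integral_nonneg)
    ultimately show "(\<integral> x \<in> A. qr x \<partial>\<mu>) = (\<integral> x \<in> A. qTr (T x) \<partial>\<mu>)"
      by (metis ennreal_inj)
  qed
  have KLT: "KL_ext \<mu>T \<nu>T = (\<integral>\<^sup>+ y. ennreal (Fk (qTr y)) \<partial>\<mu>T)"
    using acT by (simp add: KL_ext_Fk qT_def qTr_def)
  have KL: "KL_ext \<mu> \<nu> = (\<integral>\<^sup>+ x. ennreal (Fk (qr x)) \<partial>\<mu>)"
    using ac by (simp add: KL_ext_Fk q_def qr_def)
  have "(\<integral>\<^sup>+ y. ennreal (Fk (qTr y)) \<partial>\<mu>T) = (\<integral>\<^sup>+ x. ennreal (Fk (qTr (T x))) \<partial>\<mu>)"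
    unfolding \<mu>T_def by (rule nn_integral_distr) auto
  also have "\<dots> = (\<integral>\<^sup>+ x. ennreal (Fk (real_cond_exp \<mu> G qr x)) \<partial>\<mu>)"
    using ce by (intro nn_integral_cong_AE) auto
  also have "\<dots> \<le> (\<integral>\<^sup>+ x. ennreal (Fk (qr x)) \<partial>\<mu>)"
  proof (cases "(\<integral>\<^sup>+ x. ennreal (Fk (qr x)) \<partial>\<mu>) = \<infinity>")
    case True then show ?thesis by simp
  next
    case False
    have qnn: "AE x in \<mu>. qr x \<ge> 0" by (simp add: qr_def)
    have iF: "integrable \<mu> (\<lambda>x. Fk (qr x))"
      by (rule integrableI_nonneg) (use False in \<open>auto simp: qr_def Fk_nonneg less_top\<close>)
    have J: "AE x in \<mu>. Fk (real_cond_exp \<mu> G qr x) \<le> real_cond_exp \<mu> G (\<lambda>x. Fk (qr x)) x"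
      by (rule cond_jensen_Fk[OF Pm subG int_q qnn iF])
    have "(\<integral>\<^sup>+ x. ennreal (Fk (real_cond_exp \<mu> G qr x)) \<partial>\<mu>)
        \<le> (\<integral>\<^sup>+ x. ennreal (real_cond_exp \<mu> G (\<lambda>x. Fk (qr x)) x) \<partial>\<mu>)"
      using J by (intro nn_integral_mono_AE) (auto simp: ennreal_leI)
    also have "\<dots> = ennreal (\<integral> x. real_cond_exp \<mu> G (\<lambda>x. Fk (qr x)) x \<partial>\<mu>)"
      by (rule nn_integral_eq_integral[OF G.real_cond_exp_int(1)[OF iF]])
        (rule G.real_cond_exp_pos, auto simp: qr_def Fk_nonneg)
    also have "\<dots> = ennreal (\<integral> x. Fk (qr x) \<partial>\<mu>)"
      by (simp add: G.real_cond_exp_int(2)[OF iF])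
    also have "\<dots> = (\<integral>\<^sup>+ x. ennreal (Fk (qr x)) \<partial>\<mu>)"
      by (rule nn_integral_eq_integral[OF iF, symmetric]) (auto simp: qr_def Fk_nonneg)
    finally show ?thesis .
  qed
  finally show ?thesis using KLT KL unfolding \<mu>T_def \<nu>T_def by simp
qed

lemma nn_to_real:
  assumes g[measurable]: "g \<in> borel_measurable M" and fin: "AE x in M. g x \<noteq> \<infinity>"
    and int: "(\<integral>\<^sup>+x. g x \<partial>M) < \<infinity>"
  shows "integrable M (\<lambda>x. enn2real (g x))" "ennreal (\<integral> x. enn2real (g x) \<partial>M) = (\<integral>\<^sup>+ x. g x \<partial>M)"
proof -
  have eq: "(\<integral>\<^sup>+ x. ennreal (enn2real (g x)) \<partial>M) = (\<integral>\<^sup>+ x. g x \<partial>M)"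
    using fin by (intro nn_integral_cong_AE) (auto simp: less_top)
  show i: "integrable M (\<lambda>x. enn2real (g x))"
    using eq int by (intro integrableI_nonneg) auto
  show "ennreal (\<integral> x. enn2real (g x) \<partial>M) = (\<integral>\<^sup>+ x. g x \<partial>M)"
    using nn_integral_eq_integral[OF i] eq by auto
qed

lemma subalg_vimage:
  assumes "X \<in> borel_measurable Q"
  shows "subalgebra Q (vimage_algebra (space Q) X borel)"
  unfolding subalgebra_def using sets_image_in_sets[OF refl assms] by auto

lemma push_pair:
  fixes Q :: "'a measure" and Y :: "'a \<Rightarrow> 'y::euclidean_space" and V :: "'a \<Rightarrow> 'v::euclidean_space"
  assumes P: "prob_space Q" and sub: "subalgebra Q S" and Ym[measurable]: "Y \<in> borel_measurable Q"
    and VS: "V \<in> S \<rightarrow>\<^sub>M borel"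
  defines "QX \<equiv> restr_to_subalg Q S"
  shows "distr Q borel Y \<Otimes>\<^sub>M distr Q borel V
          = distr (distr Q borel Y \<Otimes>\<^sub>M QX) (borel \<Otimes>\<^sub>M borel) (\<lambda>(y,\<omega>). (y, V \<omega>))"
    and "distr Q (borel \<Otimes>\<^sub>M borel) (\<lambda>\<omega>. (Y \<omega>, V \<omega>))
          = distr (distr Q (distr Q borel Y \<Otimes>\<^sub>M QX) (\<lambda>\<omega>. (Y \<omega>, \<omega>))) (borel \<Otimes>\<^sub>M borel) (\<lambda>(y,\<omega>). (y, V \<omega>))"
proof -
  interpret prob_space Q by fact
  have sQX: "sets QX = sets S" unfolding QX_def by (rule sets_restr_to_subalg[OF sub])
  have spQX: "space QX = space Q" unfolding QX_def by (rule space_restr_to_subalg)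
  have PQX: "prob_space QX" unfolding QX_def by (rule prob_space_restr_to_subalg[OF sub P])
  have VQX[measurable]: "V \<in> QX \<rightarrow>\<^sub>M borel" using VS measurable_cong_sets[OF sQX refl] by blast
  have VQ[measurable]: "V \<in> borel_measurable Q" by (rule measurable_from_subalg[OF sub VS])
  have idm[measurable]: "(\<lambda>\<omega>. \<omega>) \<in> Q \<rightarrow>\<^sub>M QX"
  proof (rule measurableI)
    fix A assume "A \<in> sets QX"
    then have "A \<in> sets Q" using sub sQX unfolding subalgebra_def by auto
    then show "(\<lambda>\<omega>. \<omega>) -` A \<inter> space Q \<in> sets Q" by simp
  qed (simp add: spQX)
  have dV: "distr QX borel V = distr Q borel V"
  proof (rule measure_eqI)
    fix A :: "'v set" assume A: "A \<in> sets (distr QX borel V)"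
    then have VA: "V -` A \<inter> space Q \<in> sets S" using VS A by (auto simp: measurable_def sub[unfolded subalgebra_def])
    have "emeasure (distr QX borel V) A = emeasure QX (V -` A \<inter> space QX)"
      by (rule emeasure_distr[OF VQX]) (use A in simp)
    also have "\<dots> = emeasure Q (V -` A \<inter> space Q)"
      using emeasure_restr_to_subalg[OF sub VA] spQX by (simp add: QX_def)
    also have "\<dots> = emeasure (distr Q borel V) A"
      by (rule emeasure_distr[symmetric, OF VQ]) (use A in simp)
    finally show "emeasure (distr QX borel V) A = emeasure (distr Q borel V) A" .
  qed simp
  have sfV: "sigma_finite_measure (distr QX borel V)"
    using prob_space.prob_space_distr[OF PQX VQX] by (simp add: prob_space_imp_sigma_finite)
  have "distr (distr Q borel Y) borel (\<lambda>x. x) \<Otimes>\<^sub>M distr QX borel V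
      = distr (distr Q borel Y \<Otimes>\<^sub>M QX) (borel \<Otimes>\<^sub>M borel) (\<lambda>(y,\<omega>). (y, V \<omega>))"
    by (rule pair_measure_distr[OF _ VQX sfV]) simp
  then show "distr Q borel Y \<Otimes>\<^sub>M distr Q borel V
          = distr (distr Q borel Y \<Otimes>\<^sub>M QX) (borel \<Otimes>\<^sub>M borel) (\<lambda>(y,\<omega>). (y, V \<omega>))"
    by (simp add: dV distr_id2)
  have m1: "(\<lambda>\<omega>. (Y \<omega>, \<omega>)) \<in> Q \<rightarrow>\<^sub>M (distr Q borel Y \<Otimes>\<^sub>M QX)"
    by (rule measurable_Pair) (auto simp: measurable_cong_sets[OF _ refl, of _ borel])
  have m2: "(\<lambda>(y,\<omega>). (y, V \<omega>)) \<in> (distr Q borel Y \<Otimes>\<^sub>M QX) \<rightarrow>\<^sub>M (borel \<Otimes>\<^sub>M borel)"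
    by measurable
  show "distr Q (borel \<Otimes>\<^sub>M borel) (\<lambda>\<omega>. (Y \<omega>, V \<omega>))
          = distr (distr Q (distr Q borel Y \<Otimes>\<^sub>M QX) (\<lambda>\<omega>. (Y \<omega>, \<omega>))) (borel \<Otimes>\<^sub>M borel) (\<lambda>(y,\<omega>). (y, V \<omega>))"
    by (subst distr_distr[OF m2 m1]) (simp add: comp_def)
qed

lemma dens_main:
  fixes Q :: "'a measure" and X :: "'a \<Rightarrow> 'x::euclidean_space" and Y :: "'a \<Rightarrow> 'y::euclidean_space"
    and Phi :: "'a \<Rightarrow> 'p::euclidean_space"
  assumes P: "prob_space Q" and Xm[measurable]: "X \<in> borel_measurable Q"
    and Ym[measurable]: "Y \<in> borel_measurable Q"
    and PhiS: "Phi \<in> vimage_algebra (space Q) X borel \<rightarrow>\<^sub>M borel"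
    and ci: "cond_indep Q X Y Phi"
    and ac: "absolutely_continuous (distr Q borel Y \<Otimes>\<^sub>M distr Q borel Phi)
               (distr Q (borel \<Otimes>\<^sub>M borel) (\<lambda>\<omega>. (Y \<omega>, Phi \<omega>)))"
  defines "S \<equiv> vimage_algebra (space Q) X borel"
    and "PY \<equiv> distr Q borel Y" and "PF \<equiv> distr Q borel Phi"
    and "J \<equiv> distr Q (borel \<Otimes>\<^sub>M borel) (\<lambda>\<omega>. (Y \<omega>, Phi \<omega>))"
  defines "r \<equiv> RN_deriv (PY \<Otimes>\<^sub>M PF) J"
  shows "distr Q (PY \<Otimes>\<^sub>M restr_to_subalg Q S) (\<lambda>\<omega>. (Y \<omega>, \<omega>))
          = density (PY \<Otimes>\<^sub>M restr_to_subalg Q S) (\<lambda>(y,\<omega>). r (y, Phi \<omega>))"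
proof -
  interpret prob_space Q by fact
  have subS: "subalgebra Q S" unfolding S_def by (rule subalg_vimage[OF Xm])
  define QX where "QX = restr_to_subalg Q S"
  have sQX: "sets QX = sets S" unfolding QX_def by (rule sets_restr_to_subalg[OF subS])
  have spQX: "space QX = space Q" unfolding QX_def by (rule space_restr_to_subalg)
  have PQX: "prob_space QX" unfolding QX_def by (rule prob_space_restr_to_subalg[OF subS P])
  have PhiS'[measurable]: "Phi \<in> S \<rightarrow>\<^sub>M borel" using PhiS by (simp add: S_def)
  have PhiQX[measurable]: "Phi \<in> QX \<rightarrow>\<^sub>M borel" using PhiS' measurable_cong_sets[OF sQX refl] by blast
  have PhiQ[measurable]: "Phi \<in> borel_measurable Q" by (rule measurable_from_subalg[OF subS PhiS'])
  have PPY: "prob_space PY" unfolding PY_def by (rule prob_space_distr) simp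
  have PPF: "prob_space PF" unfolding PF_def by (rule prob_space_distr) simp
  have PJ: "prob_space J" unfolding J_def by (rule prob_space_distr) simp
  interpret PYF: pair_prob_space PY PF using PPY PPF by (simp add: pair_prob_space_def pair_sigma_finite_def prob_space_imp_sigma_finite)
  interpret PYX: pair_prob_space PY QX using PPY PQX by (simp add: pair_prob_space_def pair_sigma_finite_def prob_space_imp_sigma_finite)
  have sPY[simp, measurable_cong]: "sets PY = sets borel" by (simp add: PY_def)
  have sPF[simp, measurable_cong]: "sets PF = sets borel" by (simp add: PF_def)
  have sJ: "sets J = sets (PY \<Otimes>\<^sub>M PF)" by (simp add: J_def cong: sets_pair_measure_cong)
  have dJ: "density (PY \<Otimes>\<^sub>M PF) r = J" unfolding r_def
    by (rule PYF.P.density_RN_deriv[OF ac[folded PY_def PF_def J_def] sJ])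
  have rm: "r \<in> borel_measurable (PY \<Otimes>\<^sub>M PF)" unfolding r_def by simp
  have rm'[measurable]: "r \<in> borel_measurable (borel \<Otimes>\<^sub>M borel)"
    using rm measurable_cong_sets[of "PY \<Otimes>\<^sub>M PF" "borel \<Otimes>\<^sub>M borel" borel borel]
    by (simp cong: sets_pair_measure_cong)
  define H where "H B \<phi> = (\<integral>\<^sup>+ y. indicator B y * r (y, \<phi>) \<partial>PY)" for B \<phi>
  have Hm[measurable]: "H B \<in> borel_measurable borel" if B[measurable]: "B \<in> sets borel" for B
  proof -
    have "(\<lambda>(\<phi>,y). indicator B y * r (y, \<phi>)) \<in> borel_measurable (borel \<Otimes>\<^sub>M borel)" by measurable
    then have "case_prod (\<lambda>\<phi> y. indicator B y * r (y, \<phi>)) \<in> borel_measurable (borel \<Otimes>\<^sub>M PY)"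
      using measurable_cong_sets[OF sets_pair_measure_cong[OF refl sPY] refl, of borel borel] by simp
    then show ?thesis unfolding H_def by (rule PYF.M1.borel_measurable_nn_integral)
  qed
  have HPF: "(\<integral>\<^sup>+ \<phi>. indicator C \<phi> * H B \<phi> \<partial>PF) = emeasure Q (Y -` B \<inter> Phi -` C \<inter> space Q)"
    if B[measurable]: "B \<in> sets borel" and C[measurable]: "C \<in> sets borel" for B C
  proof -
    have "(\<integral>\<^sup>+ \<phi>. indicator C \<phi> * H B \<phi> \<partial>PF)
        = (\<integral>\<^sup>+ \<phi>. \<integral>\<^sup>+ y. r (y, \<phi>) * indicator (B \<times> C) (y, \<phi>) \<partial>PY \<partial>PF)"
    proof (intro nn_integral_cong)
      fix \<phi> :: 'p
      have "indicator C \<phi> * H B \<phi> = (\<integral>\<^sup>+ y. indicator C \<phi> * (indicator B y * r (y, \<phi>)) \<partial>PY)"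
        unfolding H_def by (rule nn_integral_cmult[symmetric]) measurable
      then show "indicator C \<phi> * H B \<phi> = (\<integral>\<^sup>+ y. r (y, \<phi>) * indicator (B \<times> C) (y, \<phi>) \<partial>PY)"
        by (simp add: indicator_times mult_ac)
    qed
    also have "\<dots> = (\<integral>\<^sup>+ z. r z * indicator (B \<times> C) z \<partial>(PY \<Otimes>\<^sub>M PF))"
      by (rule PYF.nn_integral_snd) measurable
    also have "\<dots> = emeasure (density (PY \<Otimes>\<^sub>M PF) r) (B \<times> C)"
      by (rule emeasure_density[symmetric]) (use rm in auto)
    also have "\<dots> = emeasure J (B \<times> C)" using dJ by simp
    also have "\<dots> = emeasure Q (Y -` B \<inter> Phi -` C \<inter> space Q)"
      unfolding J_def by (subst emeasure_distr) (auto intro!: arg_cong[where f="emeasure Q"])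
    finally show ?thesis .
  qed
  have HQ: "(\<integral>\<^sup>+ \<omega>. indicator C (Phi \<omega>) * H B (Phi \<omega>) \<partial>Q) = emeasure Q (Y -` B \<inter> Phi -` C \<inter> space Q)"
    if B[measurable]: "B \<in> sets borel" and C[measurable]: "C \<in> sets borel" for B C
    using HPF[OF B C] unfolding PF_def by (subst (asm) nn_integral_distr) auto
  have KC: "emeasure Q (Y -` B \<inter> (X -` A \<inter> space Q))
      = (\<integral>\<^sup>+ \<omega>. indicator (X -` A \<inter> space Q) \<omega> * H B (Phi \<omega>) \<partial>Q)"
    if B[measurable]: "B \<in> sets borel" and A[measurable]: "A \<in> sets borel" for B A
  proof -
    define G where "G = gen_sigma Q Phi"
    have G_eq: "G = vimage_algebra (space Q) Phi borel" by (simp add: G_def gen_sigma_def)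
    have subG: "subalgebra Q G" using subalg_vimage[OF PhiQ] G_eq by simp
    interpret FG: finite_measure_subalgebra Q G by unfold_locales (use subG in auto)
    have PhiG[measurable]: "Phi \<in> G \<rightarrow>\<^sub>M borel" unfolding G_eq by (rule measurable_vimage_algebra1) simp
    have efin: "emeasure Q E < \<infinity>" "emeasure Q E < top" for E using emeasure_finite[of E] by (simp_all add: less_top[symmetric])
    have fin: "(\<integral>\<^sup>+ \<omega>. H B (Phi \<omega>) \<partial>Q) < \<infinity>"
      using HQ[OF B sets.top[of borel]] efin by simp
    have Hfin: "AE \<omega> in Q. H B (Phi \<omega>) \<noteq> \<infinity>"
      by (rule nn_integral_PInf_AE) (use fin in auto)
    define h where "h \<omega> = enn2real (H B (Phi \<omega>))" for \<omega>
    have hG[measurable]: "h \<in> borel_measurable G" unfolding h_def by measurable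
    have hQ[measurable]: "h \<in> borel_measurable Q" by (rule measurable_from_subalg[OF subG hG])
    have hC: "integrable Q (\<lambda>\<omega>. indicator C (Phi \<omega>) * h \<omega>) \<and>
        (\<integral>\<omega>. indicator C (Phi \<omega>) * h \<omega> \<partial>Q) = measure Q (Y -` B \<inter> Phi -` C \<inter> space Q)"
      if C[measurable]: "C \<in> sets borel" for C
    proof -
      define g where "g \<omega> = indicator C (Phi \<omega>) * H B (Phi \<omega>)" for \<omega>
      have gm[measurable]: "g \<in> borel_measurable Q" unfolding g_def by measurable
      have eg: "enn2real (g \<omega>) = indicator C (Phi \<omega>) * h \<omega>" for \<omega>
        by (simp add: g_def h_def enn2real_mult indicator_def)
      have gfin: "AE \<omega> in Q. g \<omega> \<noteq> \<infinity>" using Hfin by eventually_elim (simp add: g_def indicator_def)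
      have gint: "(\<integral>\<^sup>+ \<omega>. g \<omega> \<partial>Q) = emeasure Q (Y -` B \<inter> Phi -` C \<inter> space Q)"
        unfolding g_def by (rule HQ[OF B C])
      have gi: "(\<integral>\<^sup>+ \<omega>. g \<omega> \<partial>Q) < \<infinity>" using gint efin by simp
      have 1: "integrable Q (\<lambda>\<omega>. indicator C (Phi \<omega>) * h \<omega>)"
        using nn_to_real(1)[OF gm gfin gi] by (simp add: eg)
      have "ennreal (\<integral>\<omega>. indicator C (Phi \<omega>) * h \<omega> \<partial>Q) = ennreal (measure Q (Y -` B \<inter> Phi -` C \<inter> space Q))"
        using nn_to_real(2)[OF gm gfin gi] gint by (simp add: eg emeasure_eq_measure)
      moreover have "0 \<le> (\<integral>\<omega>. indicator C (Phi \<omega>) * h \<omega> \<partial>Q)"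
        by (rule Bochner_Integration.integral_nonneg) (simp add: h_def)
      ultimately show ?thesis using 1 by (simp add: ennreal_inj)
    qed
    have int_h: "integrable Q h" using hC[OF sets.top[of borel]] by simp
    have CE: "AE \<omega> in Q. real_cond_exp Q G (indicator (Y -` B \<inter> space Q)) \<omega> = h \<omega>"
    proof (rule FG.real_cond_exp_charact)
      show "integrable Q (indicator (Y -` B \<inter> space Q) :: 'a \<Rightarrow> real)"
        by (rule integrable_real_indicator) (auto simp: efin)
      show "integrable Q h" by (rule int_h)
      show "h \<in> borel_measurable G" by (rule hG)
      fix D assume "D \<in> sets G"
      then obtain C where C[measurable]: "C \<in> sets borel" and D: "D = Phi -` C \<inter> space Q"
        unfolding G_eq using sets_vimage_algebra2[of Phi "space Q" borel] by auto
      have "(\<integral>\<omega>\<in>D. indicator (Y -` B \<inter> space Q) \<omega> \<partial>Q) = (\<integral>\<omega>. indicator (Y -` B \<inter> Phi -` C \<inter> space Q) \<omega> \<partial>Q)"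
        unfolding set_lebesgue_integral_def D
        by (intro Bochner_Integration.integral_cong) (auto simp: indicator_def)
      also have "\<dots> = measure Q (Y -` B \<inter> Phi -` C \<inter> space Q)"
        by (simp add: Int_absorb2 Int_assoc)
      also have "\<dots> = (\<integral>\<omega>. indicator C (Phi \<omega>) * h \<omega> \<partial>Q)" using hC[OF C] by simp
      also have "\<dots> = (\<integral>\<omega>\<in>D. h \<omega> \<partial>Q)"
        unfolding set_lebesgue_integral_def D
        by (intro Bochner_Integration.integral_cong) (auto simp: indicator_def)
      finally show "(\<integral>\<omega>\<in>D. indicator (Y -` B \<inter> space Q) \<omega> \<partial>Q) = (\<integral>\<omega>\<in>D. h \<omega> \<partial>Q)" .
    qed
    have ci': "AE \<omega> in Q. real_cond_exp Q G (indicator (X -` A \<inter> Y -` B \<inter> space Q)) \<omega>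
          = real_cond_exp Q G (indicator (X -` A \<inter> space Q)) \<omega> * real_cond_exp Q G (indicator (Y -` B \<inter> space Q)) \<omega>"
      using ci A B unfolding cond_indep_def G_def by blast
    have XAm[measurable]: "X -` A \<inter> space Q \<in> sets Q" by measurable
    have XYm[measurable]: "X -` A \<inter> Y -` B \<inter> space Q \<in> sets Q" by measurable
    have ihx: "integrable Q (\<lambda>\<omega>. h \<omega> * indicator (X -` A \<inter> space Q) \<omega>)"
      using integrable_mult_indicator[OF XAm int_h] by (simp add: mult.commute)
    have "measure Q (X -` A \<inter> Y -` B \<inter> space Q) = (\<integral>\<omega>. indicator (X -` A \<inter> Y -` B \<inter> space Q) \<omega> \<partial>Q)"
      by (simp add: Int_absorb2 Int_assoc)
    also have "\<dots> = (\<integral>\<omega>. real_cond_exp Q G (indicator (X -` A \<inter> Y -` B \<inter> space Q)) \<omega> \<partial>Q)"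
      by (rule FG.real_cond_exp_int(2)[symmetric]) (auto simp: efin)
    also have "\<dots> = (\<integral>\<omega>. real_cond_exp Q G (indicator (X -` A \<inter> space Q)) \<omega> * h \<omega> \<partial>Q)"
      using ci' CE by (intro integral_cong_AE) (auto elim: AE_mp)
    also have "\<dots> = (\<integral>\<omega>. h \<omega> * real_cond_exp Q G (indicator (X -` A \<inter> space Q)) \<omega> \<partial>Q)"
      by (simp add: mult.commute)
    also have "\<dots> = (\<integral>\<omega>. h \<omega> * indicator (X -` A \<inter> space Q) \<omega> \<partial>Q)"
      by (rule FG.real_cond_exp_intg(2)[OF ihx hG]) measurable
    finally have m: "measure Q (X -` A \<inter> Y -` B \<inter> space Q) = (\<integral>\<omega>. h \<omega> * indicator (X -` A \<inter> space Q) \<omega> \<partial>Q)" .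
    have "(\<integral>\<^sup>+ \<omega>. indicator (X -` A \<inter> space Q) \<omega> * H B (Phi \<omega>) \<partial>Q)
        = (\<integral>\<^sup>+ \<omega>. ennreal (h \<omega> * indicator (X -` A \<inter> space Q) \<omega>) \<partial>Q)"
      using Hfin by (intro nn_integral_cong_AE) (auto simp: h_def indicator_def less_top)
    also have "\<dots> = ennreal (\<integral>\<omega>. h \<omega> * indicator (X -` A \<inter> space Q) \<omega> \<partial>Q)"
      by (rule nn_integral_eq_integral[OF ihx]) (simp add: h_def)
    also have "\<dots> = emeasure Q (Y -` B \<inter> (X -` A \<inter> space Q))"
      using m by (simp add: emeasure_eq_measure Int_ac)
    finally show ?thesis ..
  qed
  have gm[measurable]: "(\<lambda>(y,\<omega>). r (y, Phi \<omega>)) \<in> borel_measurable (PY \<Otimes>\<^sub>M QX)"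
    by measurable
  have Ysp: "(\<lambda>\<omega>. (Y \<omega>, \<omega>)) \<in> Q \<rightarrow>\<^sub>M (PY \<Otimes>\<^sub>M QX)"
  proof (rule measurable_Pair)
    show "Y \<in> Q \<rightarrow>\<^sub>M PY" using Ym measurable_cong_sets[OF refl sPY] by blast
    show "(\<lambda>\<omega>. \<omega>) \<in> Q \<rightarrow>\<^sub>M QX"
    proof (rule measurableI)
      fix A assume "A \<in> sets QX"
      then have "A \<in> sets Q" using subS sQX unfolding subalgebra_def by auto
      then show "(\<lambda>\<omega>. \<omega>) -` A \<inter> space Q \<in> sets Q" by simp
    qed (simp add: spQX)
  qed
  have "distr Q (PY \<Otimes>\<^sub>M QX) (\<lambda>\<omega>. (Y \<omega>, \<omega>)) = density (PY \<Otimes>\<^sub>M QX) (\<lambda>(y,\<omega>). r (y, Phi \<omega>))"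
  proof (rule measure_eqI_generator_eq[where E="{a \<times> b | a b. a \<in> sets PY \<and> b \<in> sets QX}"
        and \<Omega>="space PY \<times> space QX" and A="\<lambda>_. space PY \<times> space QX"])
    show "Int_stable {a \<times> b | a b. a \<in> sets PY \<and> b \<in> sets QX}"
      by (rule Int_stable_pair_measure_generator)
    show "{a \<times> b | a b. a \<in> sets PY \<and> b \<in> sets QX} \<subseteq> Pow (space PY \<times> space QX)"
      using sets.sets_into_space[of _ PY] sets.sets_into_space[of _ QX] by blast
    show "sets (distr Q (PY \<Otimes>\<^sub>M QX) (\<lambda>\<omega>. (Y \<omega>, \<omega>))) = sigma_sets (space PY \<times> space QX) {a \<times> b | a b. a \<in> sets PY \<and> b \<in> sets QX}"
      by (simp only: sets_distr sets_pair_measure)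
    show "sets (density (PY \<Otimes>\<^sub>M QX) (\<lambda>(y,\<omega>). r (y, Phi \<omega>))) = sigma_sets (space PY \<times> space QX) {a \<times> b | a b. a \<in> sets PY \<and> b \<in> sets QX}"
      by (simp only: sets_density sets_pair_measure)
    show "range (\<lambda>_. space PY \<times> space QX) \<subseteq> {a \<times> b | a b. a \<in> sets PY \<and> b \<in> sets QX}"
      using sets.top[of PY] sets.top[of QX] by blast
    show "(\<Union>i::nat. space PY \<times> space QX) = space PY \<times> space QX" by simp
    show "emeasure (distr Q (PY \<Otimes>\<^sub>M QX) (\<lambda>\<omega>. (Y \<omega>, \<omega>))) (space PY \<times> space QX) \<noteq> \<infinity>"
      using prob_space.emeasure_space_1[OF prob_space_distr[OF Ysp]] by (simp add: space_pair_measure)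
    fix Z0 assume "Z0 \<in> {a \<times> b | a b. a \<in> sets PY \<and> b \<in> sets QX}"
    then obtain a b where Z0: "Z0 = a \<times> b" and a[measurable]: "a \<in> sets borel" and b: "b \<in> sets QX" by auto
    then have "b \<in> sets S" using sQX by simp
    then obtain A where A[measurable]: "A \<in> sets borel" and bA: "b = X -` A \<inter> space Q"
      unfolding S_def using sets_vimage_algebra2[of X "space Q" borel] by auto
    have bm[measurable]: "b \<in> sets QX" by fact
    have "emeasure (distr Q (PY \<Otimes>\<^sub>M QX) (\<lambda>\<omega>. (Y \<omega>, \<omega>))) Z0 = emeasure Q (Y -` a \<inter> (X -` A \<inter> space Q))"
      unfolding Z0 using Ysp bm by (subst emeasure_distr) (auto simp: bA intro!: arg_cong[where f="emeasure Q"])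
    also have "\<dots> = (\<integral>\<^sup>+ \<omega>. indicator b \<omega> * H a (Phi \<omega>) \<partial>Q)" unfolding bA by (rule KC) simp_all
    also have "\<dots> = (\<integral>\<^sup>+ \<omega>. indicator b \<omega> * H a (Phi \<omega>) \<partial>QX)"
      unfolding QX_def by (rule nn_integral_subalgebra2[symmetric, OF subS]) (use bm sQX in measurable)
    also have "\<dots> = (\<integral>\<^sup>+ \<omega>. \<integral>\<^sup>+ y. r (y, Phi \<omega>) * indicator (a \<times> b) (y, \<omega>) \<partial>PY \<partial>QX)"
    proof (intro nn_integral_cong)
      fix \<omega>
      have "indicator b \<omega> * H a (Phi \<omega>) = (\<integral>\<^sup>+ y. indicator b \<omega> * (indicator a y * r (y, Phi \<omega>)) \<partial>PY)"
        unfolding H_def by (rule nn_integral_cmult[symmetric]) measurable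
      then show "indicator b \<omega> * H a (Phi \<omega>) = (\<integral>\<^sup>+ y. r (y, Phi \<omega>) * indicator (a \<times> b) (y, \<omega>) \<partial>PY)"
        by (simp add: indicator_times mult_ac)
    qed
    also have "\<dots> = (\<integral>\<^sup>+ z. (\<lambda>(y,\<omega>). r (y, Phi \<omega>)) z * indicator (a \<times> b) z \<partial>(PY \<Otimes>\<^sub>M QX))"
      using PYX.nn_integral_snd[of "\<lambda>z. (\<lambda>(y,\<omega>). r (y, Phi \<omega>)) z * indicator (a \<times> b) z"] by simp
    also have "\<dots> = emeasure (density (PY \<Otimes>\<^sub>M QX) (\<lambda>(y,\<omega>). r (y, Phi \<omega>))) Z0"
      unfolding Z0 by (rule emeasure_density[symmetric]) auto
    finally show "emeasure (distr Q (PY \<Otimes>\<^sub>M QX) (\<lambda>\<omega>. (Y \<omega>, \<omega>))) Z0 = emeasure (density (PY \<Otimes>\<^sub>M QX) (\<lambda>(y,\<omega>). r (y, Phi \<omega>))) Z0" .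
  qed
  then show ?thesis by (simp add: QX_def)
qed

theorem lemma2:
  fixes M :: "'a measure"
    and X :: "'a \<Rightarrow> 'x::euclidean_space"
    and Y :: "'a \<Rightarrow> 'y::euclidean_space"
    and E :: "'a \<Rightarrow> 'e::euclidean_space"
    and Pe :: "'e \<Rightarrow> 'a measure"
    and Phi :: "'a \<Rightarrow> 'p::euclidean_space"
    and \<epsilon> :: 'e
  assumes "prob_space M"
    and "X \<in> borel_measurable M" and "Y \<in> borel_measurable M" and "E \<in> borel_measurable M"
    and "cond_law_kernel M E Pe"
    and "invariant_feature M X Y E Pe Phi"
    and "\<epsilon> \<in> msupp (distr M borel E)"
    and "cond_indep (Pe \<epsilon>) X Y Phi"
  shows "\<forall>Z :: 'a \<Rightarrow> 'z::euclidean_space. Z \<in> gen_sigma M X \<rightarrow>\<^sub>M borel \<longrightarrow>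
           mutual_info (Pe \<epsilon>) Y Z \<le> mutual_info (Pe \<epsilon>) Y Phi"
proof (intro allI impI)
  fix Z :: "'a \<Rightarrow> 'z::euclidean_space"
  assume Zm: "Z \<in> gen_sigma M X \<rightarrow>\<^sub>M borel"
  define Q where "Q = Pe \<epsilon>"
  have PQ: "prob_space Q" and sQ: "sets Q = sets M"
    using assms(5) unfolding cond_law_kernel_def Q_def by auto
  interpret prob_space Q by fact
  have spQ: "space Q = space M" by (rule sets_eq_imp_space_eq[OF sQ])
  have Xm[measurable]: "X \<in> borel_measurable Q" using assms(2) measurable_cong_sets[OF sQ refl] by blast
  have Ym[measurable]: "Y \<in> borel_measurable Q" using assms(3) measurable_cong_sets[OF sQ refl] by blast
  have gsX: "gen_sigma M X = vimage_algebra (space Q) X borel" by (simp add: gen_sigma_def spQ)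
  have PhiS: "Phi \<in> vimage_algebra (space Q) X borel \<rightarrow>\<^sub>M borel"
    using assms(6) unfolding invariant_feature_def gsX by auto
  have ZS: "Z \<in> vimage_algebra (space Q) X borel \<rightarrow>\<^sub>M borel" using Zm gsX by simp
  have ci: "cond_indep Q X Y Phi" using assms(8) by (simp add: Q_def)
  define S where "S = vimage_algebra (space Q) X borel"
  have subS: "subalgebra Q S" unfolding S_def by (rule subalg_vimage[OF Xm])
  define PY where "PY = distr Q borel Y"
  define PF where "PF = distr Q borel Phi"
  define J where "J = distr Q (borel \<Otimes>\<^sub>M borel) (\<lambda>\<omega>. (Y \<omega>, Phi \<omega>))"
  define r where "r = RN_deriv (PY \<Otimes>\<^sub>M PF) J"
  define QX where "QX = restr_to_subalg Q S"
  define \<mu>0 where "\<mu>0 = PY \<Otimes>\<^sub>M QX"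
  define \<nu>0 where "\<nu>0 = distr Q \<mu>0 (\<lambda>\<omega>. (Y \<omega>, \<omega>))"
  have MIP: "mutual_info Q Y Phi = KL_ext (PY \<Otimes>\<^sub>M PF) J"
    by (simp add: mutual_info_def PY_def PF_def J_def)
  show "mutual_info (Pe \<epsilon>) Y Z \<le> mutual_info (Pe \<epsilon>) Y Phi"
  proof (cases "absolutely_continuous (PY \<Otimes>\<^sub>M PF) J")
    case False
    then show ?thesis using MIP by (simp add: Q_def[symmetric] KL_ext_def)
  next
    case ac: True
    have PQX: "prob_space QX" unfolding QX_def by (rule prob_space_restr_to_subalg[OF subS PQ])
    have sQX: "sets QX = sets S" unfolding QX_def by (rule sets_restr_to_subalg[OF subS])
    have PPY: "prob_space PY" unfolding PY_def by (rule prob_space_distr) simp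
    have Pmu: "prob_space \<mu>0" unfolding \<mu>0_def using PPY PQX
      by (simp add: prob_space_pair)
    have dens: "\<nu>0 = density \<mu>0 (\<lambda>(y,\<omega>). r (y, Phi \<omega>))"
      unfolding \<nu>0_def \<mu>0_def QX_def S_def r_def PY_def PF_def J_def
      by (rule dens_main[OF PQ Xm Ym PhiS ci ac[unfolded PY_def PF_def J_def]])
    have Ysp: "(\<lambda>\<omega>. (Y \<omega>, \<omega>)) \<in> Q \<rightarrow>\<^sub>M \<mu>0"
    proof (unfold \<mu>0_def, rule measurable_Pair)
      show "Y \<in> Q \<rightarrow>\<^sub>M PY" using Ym measurable_cong_sets[OF refl, of PY borel Q] by (simp add: PY_def)
      show "(\<lambda>\<omega>. \<omega>) \<in> Q \<rightarrow>\<^sub>M QX"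
      proof (rule measurableI)
        fix A assume "A \<in> sets QX"
        then have "A \<in> sets Q" using subS sQX unfolding subalgebra_def by auto
        then show "(\<lambda>\<omega>. \<omega>) -` A \<inter> space Q \<in> sets Q" by simp
      qed (simp add: QX_def space_restr_to_subalg)
    qed
    have Pnu: "prob_space \<nu>0" unfolding \<nu>0_def by (rule prob_space_distr[OF Ysp])
    have snu: "sets \<nu>0 = sets \<mu>0" by (simp add: \<nu>0_def)
    have sPY[measurable_cong]: "sets PY = sets borel" by (simp add: PY_def)
    have ZQX[measurable]: "Z \<in> QX \<rightarrow>\<^sub>M borel" using ZS sQX measurable_cong_sets[OF sQX refl, of borel] by (simp add: S_def)
    have PhiQX[measurable]: "Phi \<in> QX \<rightarrow>\<^sub>M borel" using PhiS[folded S_def] measurable_cong_sets[OF sQX refl, of borel] by blast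
    have TZ: "(\<lambda>(y,\<omega>). (y, Z \<omega>)) \<in> \<mu>0 \<rightarrow>\<^sub>M (borel \<Otimes>\<^sub>M borel)" unfolding \<mu>0_def by measurable
    have TF[measurable]: "(\<lambda>(y,\<omega>). (y, Phi \<omega>)) \<in> \<mu>0 \<rightarrow>\<^sub>M (borel \<Otimes>\<^sub>M borel)" unfolding \<mu>0_def by measurable
    note ppZ = push_pair[OF PQ subS Ym ZS[folded S_def]]
    note ppF = push_pair[OF PQ subS Ym PhiS[folded S_def]]
    have "mutual_info Q Y Z = KL_ext (distr \<mu>0 (borel \<Otimes>\<^sub>M borel) (\<lambda>(y,\<omega>). (y, Z \<omega>)))
                                     (distr \<nu>0 (borel \<Otimes>\<^sub>M borel) (\<lambda>(y,\<omega>). (y, Z \<omega>)))"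
      unfolding mutual_info_def ppZ \<mu>0_def \<nu>0_def PY_def QX_def by simp
    also have "\<dots> \<le> KL_ext \<mu>0 \<nu>0" by (rule KL_dpi[OF Pmu Pnu snu TZ])
    also have "\<dots> = mutual_info Q Y Phi"
    proof -
      interpret mu: prob_space \<mu>0 by fact
      have rm: "r \<in> borel_measurable (borel \<Otimes>\<^sub>M borel)"
        using borel_measurable_RN_deriv[of "PY \<Otimes>\<^sub>M PF" J]
          measurable_cong_sets[of "PY \<Otimes>\<^sub>M PF" "borel \<Otimes>\<^sub>M borel" borel borel]
        unfolding r_def by (simp add: PY_def PF_def cong: sets_pair_measure_cong)
      have gm: "(\<lambda>(y,\<omega>). r (y, Phi \<omega>)) \<in> borel_measurable \<mu>0"
        using measurable_comp[OF TF rm] by (simp add: comp_def case_prod_beta')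
      have ac0: "absolutely_continuous \<mu>0 \<nu>0" unfolding dens by (rule absolutely_continuousI_density[OF gm])
      have RN0: "AE z in \<mu>0. (\<lambda>(y,\<omega>). r (y, Phi \<omega>)) z = RN_deriv \<mu>0 \<nu>0 z"
        by (rule mu.RN_deriv_unique[OF gm dens[symmetric]])
      have "KL_ext \<mu>0 \<nu>0 = (\<integral>\<^sup>+ z. ennreal (Fk (enn2real (RN_deriv \<mu>0 \<nu>0 z))) \<partial>\<mu>0)"
        using ac0 by (simp add: KL_ext_Fk)
      also have "\<dots> = (\<integral>\<^sup>+ z. ennreal (Fk (enn2real (r ((\<lambda>(y,\<omega>). (y, Phi \<omega>)) z)))) \<partial>\<mu>0)"
        using RN0 by (intro nn_integral_cong_AE) (auto simp: case_prod_beta')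
      also have "\<dots> = (\<integral>\<^sup>+ w. ennreal (Fk (enn2real (r w))) \<partial>(distr \<mu>0 (borel \<Otimes>\<^sub>M borel) (\<lambda>(y,\<omega>). (y, Phi \<omega>))))"
        by (rule nn_integral_distr[symmetric, OF TF]) (use rm in measurable)
      also have "\<dots> = (\<integral>\<^sup>+ w. ennreal (Fk (enn2real (r w))) \<partial>(PY \<Otimes>\<^sub>M PF))"
        using ppF(1) by (simp add: \<mu>0_def PY_def PF_def QX_def)
      also have "\<dots> = KL_ext (PY \<Otimes>\<^sub>M PF) J" using ac by (simp add: KL_ext_Fk r_def)
      finally show ?thesis using MIP by simp
    qed
    finally show ?thesis by (simp add: Q_def)
  qed
qed

end
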